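(* Let $X=(x_n)_{n\ge1}$ be a sequence of positive real numbers such that for every $\varepsilon>0$, for all sufficiently large $n$, $$x_{n+1}>\Big(1+\frac{1}{n^{\varepsilon}}\Big)x_n.$$ Then for almost every $\alpha\in\mathbb{R}$, $$\delta_{\min}^{\alpha}(N)<\frac{1}{N^{2-o(1)}},$$ where the rate of decay of the $o(1)$ term depends on $\alpha$.
   Context: For $x\in\mathbb{R}$, $\|x\|=\min_{k\in\mathbb{Z}}|x-k|$. For $\alpha\in\mathbb{R}$, $\delta_{\min}^{\alpha}(N)=\min\{\|\alpha x_m-\alpha x_n\| : 1\le m,n\le N,\ m\ne n\}$. The notation $\frac{1}{N^{2-o(1)}}$ means $N^{-(2-f_\alpha(N))}$ for some function $f_\alpha(N)\to0$ as $N\to\infty$, the inequality holding for all sufficiently large $N$. *)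

theory Defs
  imports "HOL-Analysis.Analysis"
begin

definition dist_int :: "real \<Rightarrow> real" where
  "dist_int x = (INF k::int. \<bar>x - of_int k\<bar>)"

text \<open>Minimal gap of the dilated sequence alpha * x_n, n = 1..N, modulo 1 (meaningful for N >= 2).\<close>
definition delta_min :: "real \<Rightarrow> (nat \<Rightarrow> real) \<Rightarrow> nat \<Rightarrow> real" where
  "delta_min \<alpha> x N =
     Min {dist_int (\<alpha> * x m - \<alpha> * x n) | m n. m \<in> {1..N} \<and> n \<in> {1..N} \<and> m \<noteq> n}"

end

theory Submission
  imports Defs "HOL-Real_Asymp.Real_Asymp"
begin


lemma di_le: "dist_int x \<le> \<bar>x - of_int k\<bar>"
  unfolding dist_int_def by (rule cINF_lower) (auto intro: bdd_belowI[of _ 0])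

lemma di_ge: "(\<And>k. c \<le> \<bar>x - of_int k\<bar>) \<Longrightarrow> c \<le> dist_int x"
  unfolding dist_int_def by (rule cINF_greatest) auto

lemma di_nonneg: "0 \<le> dist_int x"
  by (rule di_ge) auto

lemma di_abs: "dist_int x \<le> \<bar>x\<bar>"
  using di_le[of x 0] by simp

lemma di_add_le: "dist_int (x + y) \<le> dist_int x + dist_int y"
proof -
  have "dist_int (x + y) - dist_int x \<le> \<bar>y - of_int l\<bar>" for l
  proof -
    have "dist_int (x + y) - \<bar>y - of_int l\<bar> \<le> \<bar>x - of_int k\<bar>" for k
      using di_le[of "x+y" "k+l"] by (simp add: abs_le_iff)
    then have "dist_int (x + y) - \<bar>y - of_int l\<bar> \<le> dist_int x" by (rule di_ge)
    then show ?thesis by simp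
  qed
  then have "dist_int (x + y) - dist_int x \<le> dist_int y" by (rule di_ge)
  then show ?thesis by simp
qed

lemma di_minus: "dist_int (- x) = dist_int x"
proof -
  have "dist_int (- x) \<le> dist_int x" for x
  proof (rule di_ge)
    fix k
    have "\<bar>- x - of_int (- k)\<bar> = \<bar>x - of_int k\<bar>" by linarith
    then show "dist_int (- x) \<le> \<bar>x - of_int k\<bar>" using di_le[of "- x" "- k"] by simp
  qed
  from this[of x] this[of "-x"] show ?thesis by simp
qed

lemma di_lip: "\<bar>dist_int x - dist_int y\<bar> \<le> \<bar>x - y\<bar>"
proof -
  have "dist_int x \<le> dist_int y + \<bar>x - y\<bar>" for x y
    using di_add_le[of y "x - y"] di_abs[of "x - y"] by simp
  from this[of x y] this[of y x] show ?thesis by (simp add: abs_le_iff abs_minus_commute)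
qed

lemma di_lower: "dist_int x - \<bar>x - y\<bar> \<le> dist_int y"
  using di_lip[of x y] by simp

lemma di_cont: "continuous_on UNIV dist_int"
  unfolding continuous_on_iff
  by (metis di_lip dist_real_def le_less_trans)

lemma di_meas[measurable]: "dist_int \<in> borel_measurable borel"
  using di_cont by (simp add: borel_measurable_continuous_onI)

lemma di_periodic: "dist_int (x + of_int z) = dist_int x"
proof -
  have "dist_int (x + of_int z) \<le> dist_int x" for x z
  proof (rule di_ge)
    fix k
    have "\<bar>x + of_int z - of_int (k + z)\<bar> = \<bar>x - of_int k\<bar>" by simp
    then show "dist_int (x + of_int z) \<le> \<bar>x - of_int k\<bar>" using di_le[of "x + of_int z" "k + z"] by simp
  qed
  from this[of x z] this[of "x + of_int z" "-z"] show ?thesis by simp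
qed


definition cell :: "real \<Rightarrow> int \<Rightarrow> real set" where
  "cell y k = {of_int k / y ..< (of_int k + 1) / y}"

lemma cell_floor:
  assumes "y > 0" shows "\<alpha> \<in> cell y \<lfloor>\<alpha> * y\<rfloor>"
proof -
  have "of_int \<lfloor>\<alpha> * y\<rfloor> \<le> \<alpha> * y" "\<alpha> * y < of_int \<lfloor>\<alpha> * y\<rfloor> + 1"
    by linarith+
  with assms show ?thesis unfolding cell_def
    by (simp add: pos_divide_le_eq pos_less_divide_eq)
qed

lemma card_meet:
  fixes k :: int
  assumes "y > 0" "y' > 0"
  defines "A \<equiv> {k'::int. of_int k' / y' < (of_int k + 1) / y \<and> of_int k / y < (of_int k' + 1) / y'}"
  shows "finite A \<and> real (card A) \<le> y' / y + 2"
proof -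
  let ?r = "y' / y"
  have sub: "A \<subseteq> {\<lfloor>of_int k * ?r\<rfloor> .. \<lceil>(of_int k + 1) * ?r\<rceil> - 1}"
  proof
    fix k' assume "k' \<in> A"
    then have 1: "of_int k' / y' < (of_int k + 1) / y" and 2: "of_int k / y < (of_int k' + 1) / y'"
      by (auto simp: A_def)
    from 1 assms have "of_int k' < (of_int k + 1) * ?r"
      by (simp add: divide_simps mult.commute)
    then have a: "k' \<le> \<lceil>(of_int k + 1) * ?r\<rceil> - 1" by linarith
    from 2 assms have "of_int k * ?r < of_int k' + 1"
      by (simp add: divide_simps mult.commute)
    then have b: "\<lfloor>of_int k * ?r\<rfloor> \<le> k'" by linarith
    from a b show "k' \<in> {\<lfloor>of_int k * ?r\<rfloor> .. \<lceil>(of_int k + 1) * ?r\<rceil> - 1}" by simp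
  qed
  have fin: "finite A" using sub finite_subset by blast
  have "card A \<le> card {\<lfloor>of_int k * ?r\<rfloor> .. \<lceil>(of_int k + 1) * ?r\<rceil> - 1}"
    using sub by (intro card_mono) auto
  also have "\<dots> = nat (\<lceil>(of_int k + 1) * ?r\<rceil> - \<lfloor>of_int k * ?r\<rfloor>)" by simp
  finally have "real (card A) \<le> real (nat (\<lceil>(of_int k + 1) * ?r\<rceil> - \<lfloor>of_int k * ?r\<rfloor>))"
    by linarith
  also have "\<dots> \<le> ?r + 2"
  proof -
    have "\<lceil>(of_int k + 1) * ?r\<rceil> - \<lfloor>of_int k * ?r\<rfloor> \<le> (of_int k + 1) * ?r + 1 - (of_int k * ?r - 1)"
      by linarith
    moreover have "(of_int k + 1) * ?r + 1 - (of_int k * ?r - 1) = ?r + 2" by algebra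
    moreover have "?r > 0" using assms by simp
    ultimately have "of_int (\<lceil>(of_int k + 1) * ?r\<rceil> - \<lfloor>of_int k * ?r\<rfloor>) \<le> ?r + 2" by linarith
    then show ?thesis using \<open>?r > 0\<close>
      by (cases "0 \<le> \<lceil>(of_int k + 1) * ?r\<rceil> - \<lfloor>of_int k * ?r\<rfloor>") (simp add: of_nat_nat, simp)
  qed
  finally show ?thesis using fin by simp
qed

lemma card_inside:
  fixes u l :: real
  assumes "y' > 0"
  defines "B \<equiv> {\<lfloor>u * y'\<rfloor> + 1 .. \<lfloor>(u + l) * y'\<rfloor> - 1}"
  shows "real (card B) \<ge> l * y' - 2" and "\<And>k'. k' \<in> B \<Longrightarrow> cell y' k' \<subseteq> {u<..<u+l}"
proof -
  have "card B = nat (\<lfloor>(u + l) * y'\<rfloor> - 1 - \<lfloor>u * y'\<rfloor>)" by (simp add: B_def)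
  moreover have "\<lfloor>(u + l) * y'\<rfloor> - 1 - \<lfloor>u * y'\<rfloor> \<ge> (u + l) * y' - 2 - u * y'" by linarith
  ultimately show "real (card B) \<ge> l * y' - 2"
    by (simp add: algebra_simps)
next
  fix k' assume "k' \<in> B"
  then have 1: "\<lfloor>u * y'\<rfloor> + 1 \<le> k'" and 2: "k' \<le> \<lfloor>(u + l) * y'\<rfloor> - 1" by (auto simp: B_def)
  from 1 have "u * y' < of_int k'" by linarith
  then have a: "u < of_int k' / y'" using assms by (simp add: pos_less_divide_eq)
  from 2 have "of_int k' + 1 \<le> (u + l) * y'" by linarith
  then have b: "(of_int k' + 1) / y' \<le> u + l" using assms by (simp add: pos_divide_le_eq)
  show "cell y' k' \<subseteq> {u<..<u+l}"
    unfolding cell_def using a b by auto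
qed

lemma killed:
  fixes k :: int and c :: real
  assumes "y > 0" "0 < r" "r \<le> 1"
  defines "u \<equiv> min (of_int k + frac c) (of_int k + 1 - r) / y"
  shows "{u<..<u + r / y} \<subseteq> cell y k" and "\<And>\<alpha>. \<alpha> \<in> {u<..<u + r / y} \<Longrightarrow> dist_int (\<alpha> * y - c) < r"
proof -
  let ?U = "min (of_int k + frac c) (of_int k + 1 - r)"
  have U1: "of_int k \<le> ?U" using assms frac_ge_0[of c] by simp
  have U2: "?U + r \<le> of_int k + 1" by simp
  have t: "?U < \<alpha> * y \<and> \<alpha> * y < ?U + r" if "\<alpha> \<in> {u<..<u + r / y}" for \<alpha>
  proof -
    have "u * y = ?U" using assms by (simp add: u_def)
    moreover have "(u + r / y) * y = ?U + r" using assms by (simp add: u_def field_simps)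
    moreover have "u < \<alpha>" "\<alpha> < u + r / y" using that by auto
    then have "u * y < \<alpha> * y" "\<alpha> * y < (u + r / y) * y"
      using assms(1) mult_strict_right_mono by blast+
    ultimately show ?thesis by simp
  qed
  show "{u<..<u + r / y} \<subseteq> cell y k"
  proof
    fix \<alpha> assume a: "\<alpha> \<in> {u<..<u + r / y}"
    from t[OF a] U1 U2 have "of_int k \<le> \<alpha> * y" "\<alpha> * y < of_int k + 1" by linarith+
    then show "\<alpha> \<in> cell y k" unfolding cell_def using assms
      by (simp add: pos_divide_le_eq pos_less_divide_eq)
  qed
  fix \<alpha> assume a: "\<alpha> \<in> {u<..<u + r / y}"
  have fc: "frac c < 1" "0 \<le> frac c" by (simp_all add: frac_lt_1)
  have "dist_int (\<alpha> * y - c) \<le> \<bar>\<alpha> * y - c - of_int (k - \<lfloor>c\<rfloor>)\<bar>" by (rule di_le)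
  also have "\<dots> = \<bar>\<alpha> * y - (of_int k + frac c)\<bar>" by (simp add: frac_def)
  also have "\<dots> < r" using t[OF a] fc by (auto simp: min_def split: if_splits)
  finally show "dist_int (\<alpha> * y - c) < r" .
qed


lemma cell_nonempty: "y' > 0 \<Longrightarrow> of_int k' / y' \<in> cell y' k'"
  unfolding cell_def by (simp add: divide_strict_right_mono)

lemma cell_step:
  fixes c :: "nat \<Rightarrow> real" and Bs :: "nat set" and k :: int
  assumes y: "y > 0" "y' > 0" and fin: "finite Bs" and r: "0 < r" "r \<le> 1"
    and sep: "\<And>m m'. m \<in> Bs \<Longrightarrow> m' \<in> Bs \<Longrightarrow> m \<noteq> m' \<Longrightarrow> 2 * r \<le> dist_int (c m - c m')"
  defines "V \<equiv> {t. \<exists>m\<in>Bs. dist_int (t - c m) < r}"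
  defines "T \<equiv> {k'. \<exists>\<alpha> \<in> cell y' k'. \<alpha> \<in> cell y k \<and> \<alpha> * y \<notin> V}"
  shows "finite T \<and> real (card T) \<le> (y' / y) * (1 - real (card Bs) * r) + 2 * real (card Bs) + 2"
proof -
  define A where "A = {k'::int. of_int k' / y' < (of_int k + 1) / y \<and> of_int k / y < (of_int k' + 1) / y'}"
  have A: "finite A" "real (card A) \<le> y' / y + 2" using card_meet[OF y, of k] by (simp_all add: A_def)
  define u where "u m = min (of_int k + frac (c m)) (of_int k + 1 - r) / y" for m
  define B where "B m = {\<lfloor>u m * y'\<rfloor> + 1 .. \<lfloor>(u m + r / y) * y'\<rfloor> - 1}" for m
  have Bcard: "real (card (B m)) \<ge> (r / y) * y' - 2" for m
    using card_inside(1)[OF y(2), where u="u m" and l="r / y"] by (simp add: B_def)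
  have Bcell: "cell y' k' \<subseteq> {u m<..<u m + r / y}" if "k' \<in> B m" for k' m
    using card_inside(2)[OF y(2), where u="u m" and l="r / y" and k'=k'] that by (simp add: B_def)
  have kill1: "{u m<..<u m + r / y} \<subseteq> cell y k" for m
    using killed(1)[OF y(1) r, of k "c m"] by (simp add: u_def)
  have kill2: "dist_int (\<alpha> * y - c m) < r" if "\<alpha> \<in> {u m<..<u m + r / y}" for \<alpha> m
    using killed(2)[OF y(1) r, of \<alpha> k "c m"] that by (simp add: u_def)
  have inA: "k' \<in> A" if "\<alpha> \<in> cell y' k'" "\<alpha> \<in> cell y k" for \<alpha> k'
    using that unfolding A_def cell_def by auto
  have BA: "B m \<subseteq> A" for m
  proof
    fix k' assume "k' \<in> B m"
    have "of_int k' / y' \<in> cell y' k'" by (rule cell_nonempty[OF y(2)])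
    with Bcell[OF \<open>k' \<in> B m\<close>] kill1[of m] show "k' \<in> A" by (intro inA) auto
  qed
  have disj: "B m \<inter> B m' = {}" if "m \<in> Bs" "m' \<in> Bs" "m \<noteq> m'" for m m'
  proof (rule ccontr)
    assume "B m \<inter> B m' \<noteq> {}"
    then obtain k' where k': "k' \<in> B m" "k' \<in> B m'" by auto
    define p where "p = of_int k' / y'"
    have p: "p \<in> cell y' k'" unfolding p_def by (rule cell_nonempty[OF y(2)])
    have d1: "dist_int (p * y - c m) < r" using kill2 Bcell[OF k'(1)] p by blast
    have d2: "dist_int (p * y - c m') < r" using kill2 Bcell[OF k'(2)] p by blast
    have "dist_int (c m - c m') \<le> dist_int (p * y - c m') + dist_int (- (p * y - c m))"
      using di_add_le[of "p * y - c m'" "- (p * y - c m)"] by simp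
    also have "\<dots> < 2 * r" using d1 d2 by (simp only: di_minus)
    finally show False using sep[OF that] by simp
  qed
  have TA: "T \<subseteq> A - (\<Union>m\<in>Bs. B m)"
  proof
    fix k' assume "k' \<in> T"
    then obtain \<alpha> where a: "\<alpha> \<in> cell y' k'" "\<alpha> \<in> cell y k" "\<alpha> * y \<notin> V" by (auto simp: T_def)
    have "k' \<in> A" using inA[OF a(1,2)] .
    moreover have "k' \<notin> B m" if "m \<in> Bs" for m
    proof
      assume "k' \<in> B m"
      then have "dist_int (\<alpha> * y - c m) < r" using kill2 Bcell a(1) by blast
      then have "\<alpha> * y \<in> V" using that by (auto simp: V_def)
      with a(3) show False by simp
    qed
    ultimately show "k' \<in> A - (\<Union>m\<in>Bs. B m)" by auto
  qed
  have finT: "finite T" using TA A(1) finite_subset by blast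
  have finB: "finite (B m)" for m by (simp add: B_def)
  have UB: "(\<Union>m\<in>Bs. B m) \<subseteq> A" using BA by auto
  have cardU: "card (\<Union>m\<in>Bs. B m) = (\<Sum>m\<in>Bs. card (B m))"
    using fin finB disj by (intro card_UN_disjoint) auto
  have "card T \<le> card (A - (\<Union>m\<in>Bs. B m))" using TA A(1) by (intro card_mono) auto
  also have "\<dots> = card A - card (\<Union>m\<in>Bs. B m)"
    using UB fin finB by (intro card_Diff_subset) auto
  finally have "real (card T) \<le> real (card A) - real (card (\<Union>m\<in>Bs. B m))"
    using card_mono[OF A(1) UB] by linarith
  also have "real (card (\<Union>m\<in>Bs. B m)) = (\<Sum>m\<in>Bs. real (card (B m)))"
    by (simp add: cardU)
  finally have c1: "real (card T) \<le> real (card A) - (\<Sum>m\<in>Bs. real (card (B m)))" .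
  have "(\<Sum>m\<in>Bs. real (card (B m))) \<ge> (\<Sum>m\<in>Bs. (r / y) * y' - 2)"
    by (rule sum_mono) (rule Bcard)
  then have "real (card T) \<le> y' / y + 2 - real (card Bs) * ((r / y) * y' - 2)"
    using A(2) c1 by simp
  also have "\<dots> = (y' / y) * (1 - real (card Bs) * r) + 2 * real (card Bs) + 2"
    by (simp add: algebra_simps)
  finally show ?thesis using finT by simp
qed


lemma measure_cells:
  assumes "Y > 0" "finite S"
  shows "measure lborel (\<Union>k\<in>S. cell Y k) \<le> real (card S) / Y"
proof -
  have eq: "measure lborel (cell Y k) = 1 / Y" for k
  proof -
    have "of_int k / Y \<le> (of_int k + 1) / Y" using assms(1) by (simp add: divide_right_mono)
    moreover have "(of_int k + 1) / Y - of_int k / Y = 1 / Y" by (simp add: diff_divide_distrib[symmetric])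
    ultimately show ?thesis using assms(1) by (simp add: cell_def)
  qed
  have "measure lborel (\<Union>k\<in>S. cell Y k) \<le> (\<Sum>k\<in>S. measure lborel (cell Y k))"
    using assms(2) by (intro measure_UNION_le) (auto simp: cell_def)
  then show ?thesis by (simp add: eq)
qed

lemma iter:
  fixes c :: "nat \<Rightarrow> real" and Bs :: "nat set" and y :: "nat \<Rightarrow> real"
  assumes fin: "finite Bs" and r: "0 < r" "r \<le> 1"
    and sep: "\<And>m m'. m \<in> Bs \<Longrightarrow> m' \<in> Bs \<Longrightarrow> m \<noteq> m' \<Longrightarrow> 2 * r \<le> dist_int (c m - c m')"
    and h: "h > 0" and ypos: "\<And>i. 1 \<le> i \<Longrightarrow> y i > 0" and y1: "y 1 * h \<ge> 2"
    and q: "q = real (card Bs) * r" "q \<le> 1" "q > 0"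
    and ratio: "\<And>i. 1 \<le> i \<Longrightarrow> i < L \<Longrightarrow> y (Suc i) \<ge> y i * (4 * real (card Bs) + 4) / q"
  defines "V \<equiv> {t. \<exists>m\<in>Bs. dist_int (t - c m) < r}"
  assumes j: "1 \<le> j" "j \<le> L"
  shows "\<exists>S. finite S \<and> real (card S) \<le> 2 * h * y j * (1 - q / 2) ^ (j - 1) \<and>
           {\<alpha> \<in> {a..<a+h}. \<forall>i\<in>{1..<j}. \<alpha> * y i \<notin> V} \<subseteq> (\<Union>k\<in>S. cell (y j) k)"
  using j(1) j
proof (induction j rule: dec_induct)
  case base
  define S where "S = {\<lfloor>a * y 1\<rfloor> .. \<lfloor>(a + h) * y 1\<rfloor>}"
  have y1p: "y 1 > 0" using ypos by simp
  have "card S = nat (\<lfloor>(a + h) * y 1\<rfloor> - \<lfloor>a * y 1\<rfloor> + 1)" by (simp add: S_def)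
  moreover have "\<lfloor>(a + h) * y 1\<rfloor> - \<lfloor>a * y 1\<rfloor> + 1 \<le> (a + h) * y 1 - (a * y 1 - 1) + 1" by linarith
  moreover have "(a + h) * y 1 - (a * y 1 - 1) + 1 = h * y 1 + 2" by algebra
  moreover have "\<lfloor>a * y 1\<rfloor> \<le> \<lfloor>(a + h) * y 1\<rfloor>"
    using h y1p by (intro floor_mono) (simp add: mult_right_mono)
  ultimately have "real (card S) \<le> h * y 1 + 2" by simp
  also have "\<dots> \<le> 2 * h * y 1 * (1 - q / 2) ^ (1 - 1)" using y1 by (simp add: mult.commute)
  finally have c: "real (card S) \<le> 2 * h * y 1 * (1 - q / 2) ^ (1 - 1)" .
  have "{\<alpha> \<in> {a..<a+h}. \<forall>i\<in>{1..<1}. \<alpha> * y i \<notin> V} \<subseteq> (\<Union>k\<in>S. cell (y 1) k)"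
  proof
    fix \<alpha> assume "\<alpha> \<in> {\<alpha> \<in> {a..<a+h}. \<forall>i\<in>{1..<1}. \<alpha> * y i \<notin> V}"
    then have a: "a \<le> \<alpha>" "\<alpha> < a + h" by auto
    have "\<lfloor>a * y 1\<rfloor> \<le> \<lfloor>\<alpha> * y 1\<rfloor>" using a y1p by (intro floor_mono) (simp add: mult_right_mono)
    moreover have "\<lfloor>\<alpha> * y 1\<rfloor> \<le> \<lfloor>(a + h) * y 1\<rfloor>" using a y1p by (intro floor_mono) (simp add: mult_right_mono)
    ultimately have "\<lfloor>\<alpha> * y 1\<rfloor> \<in> S" by (simp add: S_def)
    with cell_floor[OF y1p, of \<alpha>] show "\<alpha> \<in> (\<Union>k\<in>S. cell (y 1) k)" by auto
  qed
  with c show ?case by (intro exI[of _ S]) (simp add: S_def)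
next
  case (step n)
  then obtain S where S: "finite S" "real (card S) \<le> 2 * h * y n * (1 - q / 2) ^ (n - 1)"
    "{\<alpha> \<in> {a..<a+h}. \<forall>i\<in>{1..<n}. \<alpha> * y i \<notin> V} \<subseteq> (\<Union>k\<in>S. cell (y n) k)" by auto
  have yn: "y n > 0" "y (Suc n) > 0" using ypos step by auto
  define T where "T k = {k'. \<exists>\<alpha> \<in> cell (y (Suc n)) k'. \<alpha> \<in> cell (y n) k \<and> \<alpha> * y n \<notin> V}" for k
  define K where "K = real (card Bs)"
  define \<rho> where "\<rho> = y (Suc n) / y n"
  have T: "finite (T k) \<and> real (card (T k)) \<le> \<rho> * (1 - K * r) + 2 * K + 2" for k
    using cell_step[OF yn(1) yn(2) fin r sep, where k=k] unfolding T_def V_def \<rho>_def K_def by simp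
  have \<rho>: "\<rho> \<ge> (4 * K + 4) / q"
    using ratio[of n] step yn by (simp add: \<rho>_def K_def pos_le_divide_eq mult.commute)
  have Kq: "K * r = q" using q by (simp add: K_def)
  have bnd: "\<rho> * (1 - K * r) + 2 * K + 2 \<le> \<rho> * (1 - q / 2)"
  proof -
    have "(4 * K + 4) \<le> \<rho> * q" using \<rho> q(3) by (simp add: pos_divide_le_eq)
    then show ?thesis using Kq by (simp add: algebra_simps)
  qed
  define S' where "S' = (\<Union>k\<in>S. T k)"
  have finS': "finite S'" using S(1) T by (simp add: S'_def)
  have "card S' \<le> (\<Sum>k\<in>S. card (T k))" unfolding S'_def by (rule card_UN_le[OF S(1)])
  then have "real (card S') \<le> (\<Sum>k\<in>S. real (card (T k)))" by (metis of_nat_le_iff of_nat_sum)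
  also have "\<dots> \<le> (\<Sum>k\<in>S. \<rho> * (1 - q / 2))" using T bnd by (intro sum_mono) (meson order_trans)
  also have "\<dots> = real (card S) * (\<rho> * (1 - q / 2))" by simp
  also have "\<dots> \<le> (2 * h * y n * (1 - q / 2) ^ (n - 1)) * (\<rho> * (1 - q / 2))"
    using S(2) q yn by (intro mult_right_mono) (auto simp: \<rho>_def)
  also have "\<dots> = 2 * h * (y n * \<rho>) * (1 - q / 2) ^ (Suc (n - 1))" by (simp add: algebra_simps)
  also have "\<dots> = 2 * h * y (Suc n) * (1 - q / 2) ^ (Suc n - 1)"
    using yn step(1) by (simp add: \<rho>_def)
  finally have cS': "real (card S') \<le> 2 * h * y (Suc n) * (1 - q / 2) ^ (Suc n - 1)" .
  have "{\<alpha> \<in> {a..<a+h}. \<forall>i\<in>{1..<Suc n}. \<alpha> * y i \<notin> V} \<subseteq> (\<Union>k\<in>S'. cell (y (Suc n)) k)"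
  proof
    fix \<alpha> assume a: "\<alpha> \<in> {\<alpha> \<in> {a..<a+h}. \<forall>i\<in>{1..<Suc n}. \<alpha> * y i \<notin> V}"
    then have "\<alpha> \<in> {\<alpha> \<in> {a..<a+h}. \<forall>i\<in>{1..<n}. \<alpha> * y i \<notin> V}" by auto
    with S(3) obtain k where k: "k \<in> S" "\<alpha> \<in> cell (y n) k" by auto
    have "\<alpha> * y n \<notin> V" using a step(1) by auto
    then have "\<lfloor>\<alpha> * y (Suc n)\<rfloor> \<in> T k" using k cell_floor[OF yn(2), of \<alpha>] by (auto simp: T_def)
    then show "\<alpha> \<in> (\<Union>k\<in>S'. cell (y (Suc n)) k)" using k(1) cell_floor[OF yn(2), of \<alpha>]
      by (auto simp: S'_def)
  qed
  with finS' cS' show ?case by blast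
qed


lemma cell_fmeas: "cell Y k \<in> fmeasurable lborel"
proof (rule fmeasurableI2[of "cbox (of_int k / Y) ((of_int k + 1) / Y)"])
  show "cbox (of_int k / Y) ((of_int k + 1) / Y) \<in> fmeasurable lborel" by (rule fmeasurable_cbox)
  show "cell Y k \<subseteq> cbox (of_int k / Y) ((of_int k + 1) / Y)" by (auto simp: cell_def)
  show "cell Y k \<in> sets lborel" by (simp add: cell_def)
qed

lemma F_meas:
  fixes x :: "nat \<Rightarrow> real" and N :: nat
  shows "{\<alpha>::real. \<forall>m\<in>{1..N}. \<forall>n\<in>{1..N}. m \<noteq> n \<longrightarrow> \<delta> \<le> dist_int (\<alpha> * x m - \<alpha> * x n)} \<in> sets lborel"
proof -
  have p[measurable]: "Measurable.pred borel (\<lambda>\<alpha>::real. \<delta> \<le> dist_int (\<alpha> * x m - \<alpha> * x n))" for m n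
  proof -
    have g[measurable]: "(\<lambda>\<alpha>::real. dist_int (\<alpha> * x m - \<alpha> * x n)) \<in> borel_measurable borel"
      by (rule measurable_compose[OF _ di_meas]) simp
    show ?thesis by measurable
  qed
  have "Measurable.pred borel (\<lambda>\<alpha>::real. \<forall>m\<in>{1..N}. \<forall>n\<in>{1..N}. m \<noteq> n \<longrightarrow> \<delta> \<le> dist_int (\<alpha> * x m - \<alpha> * x n))"
    by measurable
  then show ?thesis by (simp add: pred_def)
qed

lemma cell0_bound:
  fixes x :: "nat \<Rightarrow> real"
  assumes pos: "\<And>n. 1 \<le> n \<Longrightarrow> x n > 0"
    and mono: "\<And>m n. n0 \<le> m \<Longrightarrow> m \<le> n \<Longrightarrow> x m \<le> x n"
    and n0: "1 \<le> n0" "n0 \<le> K"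
    and \<delta>: "0 < \<delta>" "\<delta> \<le> 1"
    and q: "q = real (K + 1 - n0) * (\<delta> / 4)" "q \<le> 1"
    and s: "1 \<le> s" "\<And>n. K \<le> n \<Longrightarrow> n + s \<le> N \<Longrightarrow> x (n + s) \<ge> (32 / \<delta>) * x n"
    and L: "1 \<le> L" "K + L * s \<le> N"
    and h: "h = \<delta> / (4 * x K)"
  defines "F \<equiv> {\<alpha>. \<forall>m\<in>{1..N}. \<forall>n\<in>{1..N}. m \<noteq> n \<longrightarrow> \<delta> \<le> dist_int (\<alpha> * x m - \<alpha> * x n)}"
  shows "measure lborel (F \<inter> {a..<a+h}) \<le> 2 * h * (1 - q / 2) ^ (L - 1)"
proof (cases "F \<inter> {a..<a+h} = {}")
  case True
  have "x K > 0" using pos n0 by simp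
  then have "h \<ge> 0" using h \<delta> by simp
  then show ?thesis using q \<delta> True by simp
next
  case False
  then obtain \<alpha>0 where \<alpha>0: "\<alpha>0 \<in> F" "a \<le> \<alpha>0" "\<alpha>0 < a + h" by auto
  define X where "X = x K"
  have Xp: "X > 0" using pos n0 by (simp add: X_def)
  have hp: "h > 0" using h \<delta> Xp by (simp add: X_def)
  have hX: "h * X = \<delta> / 4" using h Xp by (simp add: X_def)
  define Bs where "Bs = {n0..K}"
  have cardB: "card Bs = K + 1 - n0" by (simp add: Bs_def)
  have finB: "finite Bs" by (simp add: Bs_def)
  have xB: "0 < x m" "x m \<le> X" if "m \<in> Bs" for m
    using that pos mono n0 by (auto simp: Bs_def X_def)
  have KN: "K \<le> N" using L s by (metis le_add1 order_trans)
  have BN: "m \<in> {1..N}" if "m \<in> Bs" for m using that n0 KN by (auto simp: Bs_def)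
  have close: "\<bar>\<alpha> * x m - a * x m\<bar> \<le> \<delta> / 4" if "m \<in> Bs" "a \<le> \<alpha>" "\<alpha> < a + h" for m \<alpha>
  proof -
    have "\<bar>\<alpha> * x m - a * x m\<bar> = \<bar>\<alpha> - a\<bar> * x m" using xB[OF that(1)] by (simp add: abs_mult left_diff_distrib[symmetric])
    also have "\<dots> \<le> h * X" using that xB[OF that(1)] by (intro mult_mono) auto
    finally show ?thesis using hX by simp
  qed
  define c where "c m = a * x m" for m
  define r where "r = \<delta> / 4"
  have sep: "2 * r \<le> dist_int (c m - c m')" if "m \<in> Bs" "m' \<in> Bs" "m \<noteq> m'" for m m'
  proof -
    have d: "\<delta> \<le> dist_int (\<alpha>0 * x m - \<alpha>0 * x m')" using \<alpha>0(1) BN that by (auto simp: F_def)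
    have "\<bar>(\<alpha>0 * x m - \<alpha>0 * x m') - (c m - c m')\<bar> \<le> \<bar>\<alpha>0 * x m - a * x m\<bar> + \<bar>\<alpha>0 * x m' - a * x m'\<bar>"
      by (simp add: c_def)
    also have "\<dots> \<le> \<delta> / 4 + \<delta> / 4" using close[OF that(1) \<alpha>0(2,3)] close[OF that(2) \<alpha>0(2,3)] by simp
    finally show ?thesis using di_lower[of "\<alpha>0 * x m - \<alpha>0 * x m'" "c m - c m'"] d by (simp add: r_def)
  qed
  define y where "y i = x (K + i * s)" for i
  define V where "V = {t. \<exists>m\<in>Bs. dist_int (t - c m) < r}"
  have ypos: "y i > 0" if "1 \<le> i" for i using pos n0 by (simp add: y_def)
  have yK: "y 1 \<ge> (32 / \<delta>) * X"
  proof -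
    have "1 * s \<le> L * s" by (rule mult_le_mono1[OF L(1)])
    then have "K + s \<le> N" using L(2) by linarith
    then show ?thesis using s(2)[of K] by (simp add: y_def X_def)
  qed
  have y1: "y 1 * h \<ge> 2"
  proof -
    have "y 1 * h \<ge> (32 / \<delta>) * X * h" using mult_right_mono[OF yK less_imp_le[OF hp]] by simp
    also have "(32 / \<delta>) * X * h = 8" using hX \<delta> by (simp add: field_simps)
    finally show ?thesis by simp
  qed
  have qdef: "q = real (card Bs) * r" by (simp add: q cardB r_def)
  have "real (K + 1 - n0) * (\<delta> / 4) > 0" using n0 \<delta> by (intro mult_pos_pos) auto
  then have qpos: "q > 0" unfolding q(1) .
  have ratio: "y (Suc i) \<ge> y i * (4 * real (card Bs) + 4) / q" if "1 \<le> i" "i < L" for i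
  proof -
    have "K + i * s + s \<le> N"
    proof -
      have "K + i * s + s = K + Suc i * s" by simp
      also have "\<dots> \<le> K + L * s" using that by (intro add_left_mono mult_right_mono) auto
      finally show ?thesis using L by simp
    qed
    then have A: "x (K + i * s + s) \<ge> (32 / \<delta>) * x (K + i * s)" by (intro s(2)) simp_all
    have e: "K + Suc i * s = K + i * s + s" by simp
    have "y (Suc i) \<ge> (32 / \<delta>) * y i" unfolding y_def e using A .
    moreover have "(4 * real (card Bs) + 4) / q \<le> 32 / \<delta>"
    proof -
      have cB: "real (card Bs) \<ge> 1" using cardB n0 by simp
      have "(4 * real (card Bs) + 4) / q = 16 * (real (card Bs) + 1) / (real (card Bs) * \<delta>)"
        using \<delta> cB unfolding qdef r_def by (simp add: field_simps)
      also have "\<dots> \<le> 32 / \<delta>" using cB \<delta> by (simp add: field_simps)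
      finally show ?thesis .
    qed
    moreover have "y i * ((4 * real (card Bs) + 4) / q) \<le> y i * (32 / \<delta>)"
      using ypos[OF that(1)] calculation(2) by (intro mult_left_mono) auto
    ultimately show ?thesis by (simp add: mult.commute)
  qed
  have ex: "\<exists>S. finite S \<and> real (card S) \<le> 2 * h * y L * (1 - q / 2) ^ (L - 1) \<and>
    {\<alpha> \<in> {a..<a+h}. \<forall>i\<in>{1..<L}. \<alpha> * y i \<notin> V} \<subseteq> (\<Union>k\<in>S. cell (y L) k)"
    unfolding V_def
  proof (rule iter[where Bs=Bs and c=c and r=r and h=h and y=y and q=q and L=L and j=L and a=a])
  qed (use finB sep hp ypos y1 qdef q(2) qpos ratio \<delta> L(1) in \<open>auto simp: r_def\<close>)
  then obtain S where S: "finite S" "real (card S) \<le> 2 * h * y L * (1 - q / 2) ^ (L - 1)"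
    "{\<alpha> \<in> {a..<a+h}. \<forall>i\<in>{1..<L}. \<alpha> * y i \<notin> V} \<subseteq> (\<Union>k\<in>S. cell (y L) k)"
    by blast
  have sub: "F \<inter> {a..<a+h} \<subseteq> {\<alpha> \<in> {a..<a+h}. \<forall>i\<in>{1..<L}. \<alpha> * y i \<notin> V}"
  proof
    fix \<alpha> assume aF: "\<alpha> \<in> F \<inter> {a..<a+h}"
    have "\<alpha> * y i \<notin> V" if i: "i \<in> {1..<L}" for i
    proof
    assume vi: "\<alpha> * y i \<in> V"
    have a: "\<alpha> \<in> F" "a \<le> \<alpha>" "\<alpha> < a + h" "i \<in> {1..<L}" using aF i by auto
    obtain m where m: "m \<in> Bs" "dist_int (\<alpha> * y i - c m) < r" using vi by (auto simp: V_def)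
    define n where "n = K + i * s"
    have nN: "n \<in> {1..N}"
    proof -
      have "K + i * s \<le> K + L * s" using a(4) by (intro add_left_mono mult_right_mono) auto
      then have "K + i * s \<le> N" using L(2) by linarith
      moreover have "1 \<le> K + i * s" using n0 by linarith
      ultimately show ?thesis by (simp add: n_def)
    qed
    have "n \<noteq> m" using m(1) a(4) s(1) by (auto simp: n_def Bs_def)
    then have d: "\<delta> \<le> dist_int (\<alpha> * x n - \<alpha> * x m)" using a(1) nN BN[OF m(1)] by (auto simp: F_def)
    have "\<bar>(\<alpha> * x n - \<alpha> * x m) - (\<alpha> * y i - c m)\<bar> \<le> \<delta> / 4"
      using close[OF m(1) a(2,3)] by (simp add: y_def n_def c_def abs_minus_commute)
    then have "dist_int (\<alpha> * y i - c m) \<ge> \<delta> - \<delta> / 4"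
      using di_lower[of "\<alpha> * x n - \<alpha> * x m" "\<alpha> * y i - c m"] d by simp
    then show False using m(2) \<delta> by (simp add: r_def)
    qed
    then show "\<alpha> \<in> {\<alpha> \<in> {a..<a+h}. \<forall>i\<in>{1..<L}. \<alpha> * y i \<notin> V}" using aF by auto
  qed
  have yL: "y L > 0" using ypos L by simp
  have "measure lborel (F \<inter> {a..<a+h}) \<le> measure lborel (\<Union>k\<in>S. cell (y L) k)"
  proof (rule measure_mono_fmeasurable)
    show "F \<inter> {a..<a+h} \<subseteq> (\<Union>k\<in>S. cell (y L) k)" using sub S(3) by blast
    show "F \<inter> {a..<a+h} \<in> sets lborel" using F_meas[of N \<delta> x] unfolding F_def by simp
    show "(\<Union>k\<in>S. cell (y L) k) \<in> fmeasurable lborel"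
      using S(1) by (intro fmeasurable.finite_UN) (auto simp: cell_fmeas)
  qed
  also have "\<dots> \<le> real (card S) / y L" by (rule measure_cells[OF yL S(1)])
  also have "\<dots> \<le> 2 * h * y L * (1 - q / 2) ^ (L - 1) / y L" by (rule divide_right_mono[OF S(2)]) (use yL in simp)
  also have "\<dots> = 2 * h * (1 - q / 2) ^ (L - 1)" using yL by simp
  finally show ?thesis .
qed


lemma total_bound:
  fixes x :: "nat \<Rightarrow> real"
  assumes pos: "\<And>n. 1 \<le> n \<Longrightarrow> x n > 0"
    and mono: "\<And>m n. n0 \<le> m \<Longrightarrow> m \<le> n \<Longrightarrow> x m \<le> x n"
    and n0: "1 \<le> n0" "n0 \<le> K"
    and \<delta>: "0 < \<delta>" "\<delta> \<le> 1"
    and q: "q = real (K + 1 - n0) * (\<delta> / 4)" "q \<le> 1"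
    and s: "1 \<le> s" "\<And>n. K \<le> n \<Longrightarrow> n + s \<le> N \<Longrightarrow> x (n + s) \<ge> (32 / \<delta>) * x n"
    and L: "1 \<le> L" "K + L * s \<le> N"
    and h: "h = \<delta> / (4 * x K)"
    and M: "M \<ge> 0"
  defines "F \<equiv> {\<alpha>. \<forall>m\<in>{1..N}. \<forall>n\<in>{1..N}. m \<noteq> n \<longrightarrow> \<delta> \<le> dist_int (\<alpha> * x m - \<alpha> * x n)}"
  shows "measure lborel (F \<inter> {-M..M}) \<le> (4 * M + 4 * h) * (1 - q / 2) ^ (L - 1)"
proof -
  have hp: "h > 0" using h \<delta> pos n0 by simp
  define P where "P = (1 - q / 2) ^ (L - 1)"
  have P0: "P \<ge> 0" using q by (simp add: P_def)
  define I where "I = {\<lfloor>-M / h\<rfloor> .. \<lfloor>M / h\<rfloor>}"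
  have Fm: "F \<in> sets lborel" unfolding F_def by (rule F_meas)
  have cell: "measure lborel (F \<inter> {of_int k * h..<of_int k * h + h}) \<le> 2 * h * P" for k
    unfolding F_def P_def by (rule cell0_bound[OF pos mono n0 \<delta> q s L h]) auto
  have sub: "F \<inter> {-M..M} \<subseteq> (\<Union>k\<in>I. F \<inter> {of_int k * h..<of_int k * h + h})"
  proof
    fix \<alpha> assume a: "\<alpha> \<in> F \<inter> {-M..M}"
    define k where "k = \<lfloor>\<alpha> / h\<rfloor>"
    have "of_int k \<le> \<alpha> / h" "\<alpha> / h < of_int k + 1" unfolding k_def by linarith+
    then have "of_int k * h \<le> \<alpha>" "\<alpha> < of_int k * h + h" using hp
      by (simp_all add: pos_le_divide_eq pos_divide_less_eq algebra_simps)
    moreover have "k \<in> I"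
    proof -
      have m1: "-M \<le> \<alpha>" "\<alpha> \<le> M" using a by auto
      have "-M / h \<le> \<alpha> / h" using divide_right_mono[OF m1(1), of h] hp by simp
      moreover have "\<alpha> / h \<le> M / h" using divide_right_mono[OF m1(2), of h] hp by simp
      ultimately show ?thesis unfolding I_def k_def by (auto intro!: floor_mono)
    qed
    ultimately show "\<alpha> \<in> (\<Union>k\<in>I. F \<inter> {of_int k * h..<of_int k * h + h})" using a by auto
  qed
  have "measure lborel (F \<inter> {-M..M}) \<le> measure lborel (\<Union>k\<in>I. F \<inter> {of_int k * h..<of_int k * h + h})"
  proof (rule measure_mono_fmeasurable[OF sub])
    show "F \<inter> {-M..M} \<in> sets lborel" using Fm by simp
    show "(\<Union>k\<in>I. F \<inter> {of_int k * h..<of_int k * h + h}) \<in> fmeasurable lborel"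
    proof (intro fmeasurable.finite_UN)
      show "finite I" by (simp add: I_def)
      fix k
      show "F \<inter> {of_int k * h..<of_int k * h + h} \<in> fmeasurable lborel"
      proof (rule fmeasurableI2[of "cbox (of_int k * h) (of_int k * h + h)"])
        show "cbox (of_int k * h) (of_int k * h + h) \<in> fmeasurable lborel" by (rule fmeasurable_cbox)
      qed (use Fm in auto)
    qed
  qed
  also have "\<dots> \<le> (\<Sum>k\<in>I. measure lborel (F \<inter> {of_int k * h..<of_int k * h + h}))"
    using Fm by (intro measure_UNION_le) (auto simp: I_def)
  also have "\<dots> \<le> (\<Sum>k\<in>I. 2 * h * P)" by (intro sum_mono cell)
  also have "\<dots> = real (card I) * (2 * h * P)" by simp
  also have "\<dots> \<le> (2 * M / h + 2) * (2 * h * P)"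
  proof (rule mult_right_mono)
    have "card I = nat (\<lfloor>M / h\<rfloor> - \<lfloor>-M / h\<rfloor> + 1)" by (simp add: I_def)
    moreover have "\<lfloor>M / h\<rfloor> - \<lfloor>-M / h\<rfloor> + 1 \<le> M / h - (-M / h - 1) + 1" by linarith
    moreover have "\<lfloor>-M / h\<rfloor> \<le> \<lfloor>M / h\<rfloor>" using M hp by (intro floor_mono divide_right_mono) auto
    ultimately show "real (card I) \<le> 2 * M / h + 2" by (simp add: of_nat_nat)
    show "0 \<le> 2 * h * P" using hp P0 by simp
  qed
  also have "\<dots> = (4 * M + 4 * h) * P" using hp by (simp add: field_simps)
  finally show ?thesis by (simp add: P_def)
qed

lemma exp_half_le: fixes u :: real assumes "0 \<le> u" "u \<le> 1" shows "exp (u / 2) \<le> 1 + u"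
proof -
  have "ln (1 / (1 + u)) \<le> 1 / (1 + u) - 1" using assms by (intro ln_le_minus_one) simp
  moreover have "ln (1 / (1 + u)) = - ln (1 + u)" using assms by (simp add: ln_div)
  moreover have "1 / (1 + u) - 1 = - (u / (1 + u))" using assms by (simp add: field_simps)
  ultimately have "ln (1 + u) \<ge> u / (1 + u)" by simp
  moreover have "u / (1 + u) \<ge> u / 2" using assms by (intro divide_left_mono) auto
  ultimately have "u / 2 \<le> ln (1 + u)" by linarith
  then have "exp (u / 2) \<le> exp (ln (1 + u))" by simp
  also have "\<dots> = 1 + u" using assms by simp
  finally show ?thesis .
qed

lemma growth_pow:
  fixes x :: "nat \<Rightarrow> real"
  assumes pos: "\<And>n. 1 \<le> n \<Longrightarrow> x n > 0"
    and gr: "\<And>n. n0 \<le> n \<Longrightarrow> x (Suc n) \<ge> (1 + 1 / real n powr e) * x n"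
    and n0: "1 \<le> n0" and e: "e > 0"
    and n: "n0 \<le> n" "n + j \<le> N"
  shows "x (n + j) \<ge> (1 + 1 / real N powr e) ^ j * x n"
  using n(2)
proof (induction j)
  case 0
  then show ?case by simp
next
  case (Suc j)
  then have IH: "x (n + j) \<ge> (1 + 1 / real N powr e) ^ j * x n" by simp
  have nj: "1 \<le> n + j" "n + j \<le> N" using n0 n Suc by auto
  have "1 / real N powr e \<le> 1 / real (n + j) powr e"
    using nj e by (intro divide_left_mono powr_mono2) auto
  then have f: "1 + 1 / real N powr e \<le> 1 + 1 / real (n + j) powr e" by simp
  have xp: "x (n + j) > 0" using pos nj by simp
  have "(1 + 1 / real N powr e) ^ Suc j * x n = (1 + 1 / real N powr e) * ((1 + 1 / real N powr e) ^ j * x n)"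
    by simp
  also have "\<dots> \<le> (1 + 1 / real N powr e) * x (n + j)"
    by (rule mult_left_mono[OF IH]) (simp add: add_nonneg_nonneg)
  also have "\<dots> \<le> (1 + 1 / real (n + j) powr e) * x (n + j)"
    by (rule mult_right_mono[OF f]) (use xp in simp)
  also have "\<dots> \<le> x (Suc (n + j))" using gr[of "n + j"] n by simp
  finally show ?case by simp
qed


lemma mono_from_growth:
  fixes x :: "nat \<Rightarrow> real"
  assumes pos: "\<And>n. 1 \<le> n \<Longrightarrow> x n > 0"
    and gr: "\<And>n. n0 \<le> n \<Longrightarrow> x (Suc n) \<ge> (1 + 1 / real n powr e) * x n"
    and n0: "1 \<le> n0" and mn: "n0 \<le> m" "m \<le> n"
  shows "x m \<le> x n"
  using mn(2)
proof (induction n rule: dec_induct)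
  case base then show ?case by simp
next
  case (step k)
  have "x k > 0" using pos n0 mn step by simp
  moreover have "0 \<le> 1 / real k powr e" by simp
  ultimately have "x k \<le> (1 + 1 / real k powr e) * x k" by (simp add: algebra_simps)
  also have "\<dots> \<le> x (Suc k)" using gr[of k] mn step by simp
  finally show ?case using step by simp
qed

lemma fixed_N:
  fixes x :: "nat \<Rightarrow> real" and \<epsilon> M :: real and N n0 :: nat
  assumes pos: "\<And>n. 1 \<le> n \<Longrightarrow> x n > 0"
    and gr: "\<And>n. n0 \<le> n \<Longrightarrow> x (Suc n) \<ge> (1 + 1 / real n powr (\<epsilon> / 2)) * x n"
    and n0: "1 \<le> n0" and \<epsilon>: "0 < \<epsilon>" "\<epsilon> < 1" and M: "M \<ge> 0"
    and N: "real N \<ge> 2 * real n0 + 2"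
  defines "Llow \<equiv> (real N / 2) / (2 * real N powr (\<epsilon> / 2) * ln (32 * real N powr (2 - \<epsilon>)) + 1) - 2"
  defines "qlow \<equiv> (real N / 2 - real n0) * real N powr (\<epsilon> - 2) / 4"
  assumes LL: "0 \<le> Llow"
    and CC: "(4 * M + 1 / x n0) * exp (- (1 / 2) * (qlow * Llow)) \<le> 1 / real N ^ 2"
  shows "measure lborel ({\<alpha>. \<forall>m\<in>{1..N}. \<forall>n\<in>{1..N}. m \<noteq> n \<longrightarrow> real N powr (\<epsilon> - 2) \<le> dist_int (\<alpha> * x m - \<alpha> * x n)} \<inter> {-M..M}) \<le> 1 / real N ^ 2"
proof -
  have mono: "x m \<le> x n" if "n0 \<le> m" "m \<le> n" for m n
    by (rule mono_from_growth[OF pos gr n0 that])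
  have N2: "2 * n0 + 2 \<le> N" using N by linarith
  have rN: "real N \<ge> 1" using N2 by simp
  define K where "K = N div 2"
  have n0K: "n0 \<le> K" using N2 by (simp add: K_def)
  have K1N: "K + 1 \<le> N" using N2 by (simp add: K_def)
  have Ndm: "N = 2 * K + N mod 2" "N mod 2 \<le> 1" by (simp_all add: K_def)
  then have rNdm: "real N = 2 * real K + real (N mod 2)" "real (N mod 2) \<le> 1"
    by (metis of_nat_add of_nat_mult of_nat_numeral, simp)
  have K2: "real K \<ge> (real N - 1) / 2" using rNdm by (simp add: field_simps)
  have NK: "real (N - K) \<ge> real N / 2" using K1N rNdm by (simp add: of_nat_diff field_simps)
  define \<delta> where "\<delta> = real N powr (\<epsilon> - 2)"
  have \<delta>p: "\<delta> > 0" using rN by (simp add: \<delta>_def)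
  have \<delta>1: "\<delta> \<le> 1"
  proof -
    have "real N powr (\<epsilon> - 2) \<le> real N powr 0" using rN \<epsilon> by (intro powr_mono) auto
    then show ?thesis using rN by (simp add: \<delta>_def)
  qed
  have \<delta>N: "real N * \<delta> \<le> 1"
  proof -
    have "real N * \<delta> = real N powr (1 + (\<epsilon> - 2))" using rN by (simp add: \<delta>_def powr_mult_base)
    also have "\<dots> \<le> real N powr 0" using rN \<epsilon> by (intro powr_mono) auto
    finally show ?thesis using rN by simp
  qed
  define q where "q = real (K + 1 - n0) * (\<delta> / 4)"
  have q1: "q \<le> 1"
  proof -
    have "real (K + 1 - n0) \<le> real N" using K1N by simp
    then have "q \<le> real N * (\<delta> / 4)" unfolding q_def using \<delta>p by (intro mult_right_mono) auto
    then show ?thesis using \<delta>N by simp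
  qed
  have qlow0: "qlow \<ge> 0" unfolding qlow_def using N \<delta>p by (simp add: \<delta>_def[symmetric])
  have qq: "q \<ge> qlow"
  proof -
    have "real (K + 1 - n0) = real K + 1 - real n0" using n0K by (simp add: of_nat_diff)
    then have "real (K + 1 - n0) \<ge> real N / 2 - real n0" using K2 by simp
    then show ?thesis unfolding q_def qlow_def \<delta>_def[symmetric] using \<delta>p
      by (simp add: mult_right_mono)
  qed
  define R where "R = 32 * real N powr (2 - \<epsilon>)"
  have R\<delta>: "32 / \<delta> = R"
  proof -
    have "\<delta> * real N powr (2 - \<epsilon>) = real N powr ((\<epsilon> - 2) + (2 - \<epsilon>))" unfolding \<delta>_def by (rule powr_add[symmetric])
    then have "\<delta> * real N powr (2 - \<epsilon>) = 1" using rN by simp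
    then show ?thesis using \<delta>p unfolding R_def by (simp add: field_simps)
  qed
  have R32: "R \<ge> 32"
  proof -
    have "real N powr (2 - \<epsilon>) \<ge> 1" using rN \<epsilon> by (intro ge_one_powr_ge_zero) auto
    then show ?thesis unfolding R_def by simp
  qed
  have lnR: "ln R > 0" using R32 by simp
  define E where "E = real N powr (\<epsilon> / 2)"
  have E1: "E \<ge> 1" unfolding E_def using rN \<epsilon> by (intro ge_one_powr_ge_zero) auto
  define s where "s = nat \<lceil>2 * E * ln R\<rceil>"
  have a0: "0 \<le> 2 * E * ln R" using E1 lnR by simp
  have seq: "real s = of_int \<lceil>2 * E * ln R\<rceil>" unfolding s_def using a0 by (simp add: of_nat_nat)
  have s_ge: "real s \<ge> 2 * E * ln R" using seq by linarith
  have s_le: "real s \<le> 2 * E * ln R + 1" using seq by linarith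
  have s1: "1 \<le> s"
  proof -
    have "2 * E * ln R > 0" using E1 lnR by simp
    then show ?thesis using s_ge by linarith
  qed
  have sgrow: "x (n + s) \<ge> (32 / \<delta>) * x n" if "K \<le> n" "n + s \<le> N" for n
  proof -
    define u where "u = 1 / real N powr (\<epsilon> / 2)"
    have u: "0 < u" "u \<le> 1" using E1 rN by (auto simp: u_def E_def)
    have xn: "x n > 0" using pos n0 n0K that by simp
    have "x (n + s) \<ge> (1 + u) ^ s * x n" unfolding u_def
      by (rule growth_pow[OF pos gr n0 _]) (use \<epsilon> n0K that in auto)
    moreover have "(1 + u) ^ s \<ge> R"
    proof -
      have "real s * u \<ge> 2 * ln R"
      proof -
        have "real s * u \<ge> (2 * E * ln R) * u" using s_ge u by (intro mult_right_mono) auto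
        moreover have "E * u = 1" using E1 rN by (simp add: u_def E_def)
        moreover have "(2 * E * ln R) * u = 2 * ln R * (E * u)" by (simp add: algebra_simps)
        ultimately show ?thesis by simp
      qed
      then have "exp (ln R) \<le> exp (real s * (u / 2))" by simp
      also have "\<dots> = exp (u / 2) ^ s" by (rule exp_of_nat_mult)
      also have "\<dots> \<le> (1 + u) ^ s" using exp_half_le[OF less_imp_le[OF u(1)] u(2)] by (intro power_mono) auto
      finally show ?thesis using R32 by simp
    qed
    ultimately show ?thesis using xn R\<delta> by (metis mult_right_mono order_trans less_imp_le)
  qed
  define L where "L = (N - K) div s"
  have KL: "K + L * s \<le> N" unfolding L_def using K1N div_times_less_eq_dividend[of "N - K" s] by linarith
  have Lbig: "real L - 1 \<ge> Llow"
  proof -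
    have "N - K = L * s + (N - K) mod s" by (simp add: L_def)
    moreover have "(N - K) mod s < s" using s1 by simp
    ultimately have "real (N - K) < real L * real s + real s" by (metis add_less_cancel_left of_nat_add of_nat_less_iff of_nat_mult)
    then have "real (N - K) / real s < real L + 1" using s1 by (simp add: divide_less_eq algebra_simps)
    moreover have "(real N / 2) / real s \<le> real (N - K) / real s" using NK s1 by (intro divide_right_mono) auto
    moreover have "(real N / 2) / (2 * E * ln R + 1) \<le> (real N / 2) / real s"
      using s_le s1 by (intro divide_left_mono) auto
    ultimately show ?thesis unfolding Llow_def E_def R_def by simp
  qed
  have L1: "1 \<le> L" using Lbig LL by linarith
  define h where "h = \<delta> / (4 * x K)"
  have xK: "x K \<ge> x n0" "x n0 > 0" using mono n0K pos n0 by auto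
  have "measure lborel ({\<alpha>. \<forall>m\<in>{1..N}. \<forall>n\<in>{1..N}. m \<noteq> n \<longrightarrow> \<delta> \<le> dist_int (\<alpha> * x m - \<alpha> * x n)} \<inter> {-M..M})
      \<le> (4 * M + 4 * h) * (1 - q / 2) ^ (L - 1)"
    by (rule total_bound[OF pos mono n0 n0K \<delta>p \<delta>1 q_def q1 s1 sgrow L1 KL h_def M])
  also have "\<dots> \<le> (4 * M + 1 / x n0) * exp (- (1 / 2) * (qlow * Llow))"
  proof (rule mult_mono)
    have "4 * h = \<delta> / x K" by (simp add: h_def)
    also have "\<dots> \<le> 1 / x K" using \<delta>1 xK by (intro divide_right_mono) auto
    also have "\<dots> \<le> 1 / x n0" using xK by (intro divide_left_mono) auto
    finally show "4 * M + 4 * h \<le> 4 * M + 1 / x n0" by simp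
    show "0 \<le> 4 * M + 1 / x n0" using M xK by simp
    show "0 \<le> (1 - q / 2) ^ (L - 1)" using q1 by simp
    have "(1 - q / 2) ^ (L - 1) \<le> exp (- (q / 2)) ^ (L - 1)"
      using q1 by (intro power_mono) (auto simp: exp_ge_add_one_self[of "- (q/2)", simplified])
    also have "\<dots> = exp (real (L - 1) * (- (q / 2)))" by (rule exp_of_nat_mult[symmetric])
    also have "\<dots> \<le> exp (- (1 / 2) * (qlow * Llow))"
    proof -
      have "qlow * Llow \<le> q * real (L - 1)" using qq qlow0 LL Lbig L1 by (intro mult_mono) (auto simp: of_nat_diff)
      then show ?thesis by (simp add: mult.commute)
    qed
    finally show "(1 - q / 2) ^ (L - 1) \<le> exp (- (1 / 2) * (qlow * Llow))" .
  qed
  also have "\<dots> \<le> 1 / real N ^ 2" by (rule CC)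
  finally show ?thesis by (simp add: \<delta>_def)
qed


lemma eventually_small:
  fixes x :: "nat \<Rightarrow> real" and \<epsilon> M :: real and n0 :: nat
  assumes pos: "\<And>n. 1 \<le> n \<Longrightarrow> x n > 0"
    and gr: "\<And>n. n0 \<le> n \<Longrightarrow> x (Suc n) \<ge> (1 + 1 / real n powr (\<epsilon> / 2)) * x n"
    and n0: "1 \<le> n0" and \<epsilon>: "0 < \<epsilon>" "\<epsilon> < 1" and M: "M \<ge> 0"
  shows "\<forall>\<^sub>F N in sequentially. measure lborel ({\<alpha>. \<forall>m\<in>{1..N}. \<forall>n\<in>{1..N}. m \<noteq> n \<longrightarrow> real N powr (\<epsilon> - 2) \<le> dist_int (\<alpha> * x m - \<alpha> * x n)} \<inter> {-M..M}) \<le> 1 / real N ^ 2"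
proof -
  define C where "C = 4 * M + 1 / x n0"
  have e1: "\<forall>\<^sub>F N in at_top. (N::real) \<ge> 2 * real n0 + 2" by (rule eventually_ge_at_top)
  have e2: "\<forall>\<^sub>F N in at_top. 0 \<le> (N / 2) / (2 * N powr (\<epsilon> / 2) * ln (32 * N powr (2 - \<epsilon>)) + 1) - 2"
    using \<epsilon> by real_asymp
  have e3: "\<forall>\<^sub>F N in at_top. C * exp (- (1 / 2) * (((N / 2 - real n0) * N powr (\<epsilon> - 2) / 4) *
      ((N / 2) / (2 * N powr (\<epsilon> / 2) * ln (32 * N powr (2 - \<epsilon>)) + 1) - 2))) \<le> 1 / N ^ 2"
    using \<epsilon> by real_asymp
  have "\<forall>\<^sub>F N in sequentially. real N \<ge> 2 * real n0 + 2 \<and>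
      0 \<le> (real N / 2) / (2 * real N powr (\<epsilon> / 2) * ln (32 * real N powr (2 - \<epsilon>)) + 1) - 2 \<and>
      C * exp (- (1 / 2) * (((real N / 2 - real n0) * real N powr (\<epsilon> - 2) / 4) *
      ((real N / 2) / (2 * real N powr (\<epsilon> / 2) * ln (32 * real N powr (2 - \<epsilon>)) + 1) - 2))) \<le> 1 / real N ^ 2"
    by (rule eventually_compose_filterlim[OF _ filterlim_real_sequentially]) (intro eventually_conj e1 e2 e3)
  then show ?thesis
  proof (rule eventually_mono)
    fix N assume H: "real N \<ge> 2 * real n0 + 2 \<and>
      0 \<le> (real N / 2) / (2 * real N powr (\<epsilon> / 2) * ln (32 * real N powr (2 - \<epsilon>)) + 1) - 2 \<and>
      C * exp (- (1 / 2) * (((real N / 2 - real n0) * real N powr (\<epsilon> - 2) / 4) *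
      ((real N / 2) / (2 * real N powr (\<epsilon> / 2) * ln (32 * real N powr (2 - \<epsilon>)) + 1) - 2))) \<le> 1 / real N ^ 2"
    show "measure lborel ({\<alpha>. \<forall>m\<in>{1..N}. \<forall>n\<in>{1..N}. m \<noteq> n \<longrightarrow> real N powr (\<epsilon> - 2) \<le> dist_int (\<alpha> * x m - \<alpha> * x n)} \<inter> {-M..M}) \<le> 1 / real N ^ 2"
      by (rule fixed_N[OF pos gr n0 \<epsilon> M]) (use H in \<open>simp_all add: C_def\<close>)
  qed
qed

lemma AE_eps:
  fixes x :: "nat \<Rightarrow> real" and \<epsilon> :: real
  assumes pos: "\<And>n. 1 \<le> n \<Longrightarrow> x n > 0"
    and growth: "\<forall>\<epsilon>::real. \<epsilon> > 0 \<longrightarrow>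
        (\<forall>\<^sub>F n in sequentially. x (n + 1) > (1 + 1 / real n powr \<epsilon>) * x n)"
    and \<epsilon>: "0 < \<epsilon>" "\<epsilon> < 1"
  shows "AE \<alpha> in lborel. \<forall>\<^sub>F N in sequentially. \<exists>m\<in>{1..N}. \<exists>n\<in>{1..N}. m \<noteq> n \<and>
           dist_int (\<alpha> * x m - \<alpha> * x n) < real N powr (\<epsilon> - 2)"
proof -
  have "\<forall>\<^sub>F n in sequentially. x (n + 1) > (1 + 1 / real n powr (\<epsilon> / 2)) * x n"
    using growth \<epsilon> by simp
  then obtain n1 where n1: "\<And>n. n \<ge> n1 \<Longrightarrow> x (n + 1) > (1 + 1 / real n powr (\<epsilon> / 2)) * x n"
    unfolding eventually_sequentially by blast
  define n0 where "n0 = max 1 n1"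
  have n0: "1 \<le> n0" by (simp add: n0_def)
  have gr: "x (Suc n) \<ge> (1 + 1 / real n powr (\<epsilon> / 2)) * x n" if "n0 \<le> n" for n
    using n1[of n] that by (simp add: n0_def)
  define F where "F N = {\<alpha>. \<forall>m\<in>{1..N}. \<forall>n\<in>{1..N}. m \<noteq> n \<longrightarrow> real N powr (\<epsilon> - 2) \<le> dist_int (\<alpha> * x m - \<alpha> * x n)}" for N
  have AEM: "AE \<alpha> in lborel. \<alpha> \<in> {- real M..real M} \<longrightarrow> (\<forall>\<^sub>F N in sequentially. \<alpha> \<notin> F N)" for M :: nat
  proof -
    define A where "A N = F N \<inter> {- real M..real M}" for N
    have Am: "A N \<in> sets lborel" for N unfolding A_def F_def using F_meas by auto
    have Af: "emeasure lborel (A N) < \<infinity>" for N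
    proof -
      have "emeasure lborel (A N) \<le> emeasure lborel {- real M..real M}"
        by (rule emeasure_mono) (auto simp: A_def)
      also have "\<dots> < \<infinity>" by simp
      finally show ?thesis .
    qed
    have sm: "summable (\<lambda>N. measure lborel (A N))"
    proof (rule summable_comparison_test_ev)
      show "\<forall>\<^sub>F N in sequentially. norm (measure lborel (A N)) \<le> inverse (real N ^ 2)"
        using eventually_small[OF pos gr n0 \<epsilon>, of "real M"] by (simp add: A_def F_def divide_inverse)
      show "summable (\<lambda>N. inverse (real N ^ 2))" by (rule inverse_power_summable) simp
    qed
    have "AE \<alpha> in lborel. \<forall>\<^sub>F N in sequentially. \<alpha> \<in> space lborel - A N"
      by (rule borel_cantelli_AE1[OF Am Af sm])
    then show ?thesis
    proof (rule eventually_mono)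
      fix \<alpha> assume H: "\<forall>\<^sub>F N in sequentially. \<alpha> \<in> space lborel - A N"
      show "\<alpha> \<in> {- real M..real M} \<longrightarrow> (\<forall>\<^sub>F N in sequentially. \<alpha> \<notin> F N)"
      proof
        assume I: "\<alpha> \<in> {- real M..real M}"
        from H show "\<forall>\<^sub>F N in sequentially. \<alpha> \<notin> F N"
          by (rule eventually_mono) (use I in \<open>auto simp: A_def\<close>)
      qed
    qed
  qed
  then have "AE \<alpha> in lborel. \<forall>M::nat. \<alpha> \<in> {- real M..real M} \<longrightarrow> (\<forall>\<^sub>F N in sequentially. \<alpha> \<notin> F N)"
    unfolding AE_all_countable using AEM by blast
  then show ?thesis
  proof (rule eventually_mono)
    fix \<alpha> assume H: "\<forall>M::nat. \<alpha> \<in> {- real M..real M} \<longrightarrow> (\<forall>\<^sub>F N in sequentially. \<alpha> \<notin> F N)"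
    have "\<alpha> \<in> {- real (nat \<lceil>\<bar>\<alpha>\<bar>\<rceil>)..real (nat \<lceil>\<bar>\<alpha>\<bar>\<rceil>)}" by auto linarith+
    with H have "\<forall>\<^sub>F N in sequentially. \<alpha> \<notin> F N" by blast
    then show "\<forall>\<^sub>F N in sequentially. \<exists>m\<in>{1..N}. \<exists>n\<in>{1..N}. m \<noteq> n \<and>
           dist_int (\<alpha> * x m - \<alpha> * x n) < real N powr (\<epsilon> - 2)"
      by (rule eventually_mono) (auto simp: F_def not_le)
  qed
qed

lemma delta_min_le:
  assumes "m \<in> {1..N}" "n \<in> {1..N}" "m \<noteq> n"
  shows "delta_min \<alpha> x N \<le> dist_int (\<alpha> * x m - \<alpha> * x n)"
proof -
  have sub: "{dist_int (\<alpha> * x m - \<alpha> * x n) | m n. m \<in> {1..N} \<and> n \<in> {1..N} \<and> m \<noteq> n}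
      \<subseteq> (\<lambda>p. dist_int (\<alpha> * x (fst p) - \<alpha> * x (snd p))) ` ({1..N} \<times> {1..N})" by force
  have fin: "finite {dist_int (\<alpha> * x m - \<alpha> * x n) | m n. m \<in> {1..N} \<and> n \<in> {1..N} \<and> m \<noteq> n}"
    by (rule finite_subset[OF sub]) simp
  show ?thesis unfolding delta_min_def by (rule Min_le[OF fin]) (use assms in blast)
qed

lemma f_construct:
  fixes D :: "nat \<Rightarrow> real"
  assumes ev: "\<And>k::nat. \<forall>\<^sub>F N in sequentially. D N < real N powr (- (2 - 1 / (real k + 2)))"
  shows "\<exists>f :: nat \<Rightarrow> real. (f \<longlonglongrightarrow> 0) \<and> (\<forall>\<^sub>F N in sequentially. D N < real N powr (- (2 - f N)))"
proof -
  define P where "P k N = (D N < real N powr (- (2 - 1 / (real k + 2))))" for k N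
  define g where "g N = (GREATEST k. k \<le> N \<and> P k N)" for N
  define f where "f N = (if \<exists>k\<le>N. P k N then 1 / (real (g N) + 2) else 1)" for N
  have gP: "g N \<le> N \<and> P (g N) N" if "\<exists>k\<le>N. P k N" for N
    unfolding g_def by (rule GreatestI_ex_nat) (use that in auto)
  have gge: "k \<le> g N" if "k \<le> N" "P k N" for k N
    unfolding g_def by (rule Greatest_le_nat) (use that in auto)
  have fpos: "f N > 0" for N by (simp add: f_def)
  have "\<forall>\<^sub>F N in sequentially. D N < real N powr (- (2 - f N))"
    using ev[of 0]
  proof (rule eventually_mono)
    fix N assume "D N < real N powr (- (2 - 1 / (real (0::nat) + 2)))"
    then have ex: "\<exists>k\<le>N. P k N" by (auto simp: P_def)
    then show "D N < real N powr (- (2 - f N))" using gP[OF ex] by (simp add: f_def P_def)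
  qed
  moreover have "f \<longlonglongrightarrow> 0"
  proof (rule order_tendstoI)
    fix a :: real assume a0: "a < 0"
    show "\<forall>\<^sub>F N in sequentially. a < f N" by (intro always_eventually allI) (rule less_trans[OF a0 fpos])
  next
    fix a :: real assume a: "0 < a"
    define k0 where "k0 = nat \<lceil>1 / a\<rceil>"
    have k0: "1 / (real k0 + 2) < a"
    proof -
      have "1 / a < real k0 + 2" unfolding k0_def by linarith
      then show ?thesis using a by (simp add: divide_less_eq mult.commute)
    qed
    have e1: "\<forall>\<^sub>F N in sequentially. P k0 N" using ev[of k0] by (simp add: P_def)
    have "\<forall>\<^sub>F N in sequentially. P k0 N \<and> k0 \<le> N"
      by (rule eventually_conj[OF e1 eventually_ge_at_top])
    then show "\<forall>\<^sub>F N in sequentially. f N < a"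
    proof (rule eventually_mono)
      fix N assume H: "P k0 N \<and> k0 \<le> N"
      then have ex: "\<exists>k\<le>N. P k N" by auto
      have "k0 \<le> g N" using gge H by auto
      then have "1 / (real (g N) + 2) \<le> 1 / (real k0 + 2)" by (intro divide_left_mono) auto
      then show "f N < a" using ex k0 by (simp add: f_def)
    qed
  qed
  ultimately show ?thesis by blast
qed


theorem theorem5:
  fixes x :: "nat \<Rightarrow> real"
  assumes pos: "\<forall>n\<ge>1. x n > 0"
    and growth: "\<forall>\<epsilon>::real. \<epsilon> > 0 \<longrightarrow>
        (\<forall>\<^sub>F n in sequentially. x (n + 1) > (1 + 1 / real n powr \<epsilon>) * x n)"
  shows "AE \<alpha> in lborel. \<exists>f :: nat \<Rightarrow> real. (f \<longlonglongrightarrow> 0) \<and>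
           (\<forall>\<^sub>F N in sequentially. delta_min \<alpha> x N < real N powr (- (2 - f N)))"
proof -
  have pos': "\<And>n. 1 \<le> n \<Longrightarrow> x n > 0" using pos by simp
  have AEk: "AE \<alpha> in lborel. \<forall>\<^sub>F N in sequentially. delta_min \<alpha> x N < real N powr (- (2 - 1 / (real k + 2)))"
    for k :: nat
  proof -
    define \<epsilon> where "\<epsilon> = 1 / (real k + 2)"
    have \<epsilon>: "0 < \<epsilon>" "\<epsilon> < 1" by (auto simp: \<epsilon>_def)
    from AE_eps[OF pos' growth \<epsilon>] show ?thesis
    proof (rule eventually_mono)
      fix \<alpha> assume "\<forall>\<^sub>F N in sequentially. \<exists>m\<in>{1..N}. \<exists>n\<in>{1..N}. m \<noteq> n \<and>
           dist_int (\<alpha> * x m - \<alpha> * x n) < real N powr (\<epsilon> - 2)"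
      then show "\<forall>\<^sub>F N in sequentially. delta_min \<alpha> x N < real N powr (- (2 - 1 / (real k + 2)))"
      proof (rule eventually_mono)
        fix N assume "\<exists>m\<in>{1..N}. \<exists>n\<in>{1..N}. m \<noteq> n \<and>
           dist_int (\<alpha> * x m - \<alpha> * x n) < real N powr (\<epsilon> - 2)"
        then obtain m n where mn: "m \<in> {1..N}" "n \<in> {1..N}" "m \<noteq> n"
          "dist_int (\<alpha> * x m - \<alpha> * x n) < real N powr (\<epsilon> - 2)" by blast
        have "delta_min \<alpha> x N \<le> dist_int (\<alpha> * x m - \<alpha> * x n)" by (rule delta_min_le[OF mn(1-3)])
        also have "\<dots> < real N powr (\<epsilon> - 2)" by (rule mn(4))
        also have "\<epsilon> - 2 = - (2 - 1 / (real k + 2))" by (simp add: \<epsilon>_def)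
        finally show "delta_min \<alpha> x N < real N powr (- (2 - 1 / (real k + 2)))" .
      qed
    qed
  qed
  then have "AE \<alpha> in lborel. \<forall>k::nat. \<forall>\<^sub>F N in sequentially. delta_min \<alpha> x N < real N powr (- (2 - 1 / (real k + 2)))"
    unfolding AE_all_countable by blast
  then show ?thesis
  proof (rule eventually_mono)
    fix \<alpha> assume "\<forall>k::nat. \<forall>\<^sub>F N in sequentially. delta_min \<alpha> x N < real N powr (- (2 - 1 / (real k + 2)))"
    then show "\<exists>f :: nat \<Rightarrow> real. (f \<longlonglongrightarrow> 0) \<and>
           (\<forall>\<^sub>F N in sequentially. delta_min \<alpha> x N < real N powr (- (2 - f N)))"
      by (intro f_construct) blast
  qed
qed

end
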